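(* Let $\mathbf p,\mathbf q,\mathbf r,\mathbf s$ be words, $x,y$ letters, and $\mathbf w=\mathbf pxy\mathbf qx\mathbf ry\mathbf s$. If every letter occurring in $\mathbf r$ occurs at least twice in $\mathbf w$, then $\mathbf D_{15}$ satisfies the identity $\mathbf w\approx\mathbf pyx\mathbf qx\mathbf ry\mathbf s$.
   Context: Words are elements of the free monoid over a countably infinite alphabet; distinct symbols below are distinct letters. $\prod$ denotes concatenation in increasing index order; $\operatorname{var}\Sigma$ is the monoid variety defined by identities $\Sigma$. $S_N$ is the symmetric group on $\{1,\dots,N\}$, $i\tau$ the image of $i$. For $n,m,k\in\mathbb N$, $\tau\in S_{n+m+k}$: $\mathbf c_{n,m,k}[\tau]=\bigl(\prod_{i=1}^n z_it_i\bigr)xyt\bigl(\prod_{i=n+1}^{n+m} z_it_i\bigr)x\bigl(\prod_{i=1}^{n+m+k-1} z_{i\tau}y_i^2\bigr)z_{(n+m+k)\tau}y\bigl(\prod_{i=n+m+1}^{n+m+k} t_iz_i\bigr)$; $\mathbf c'_{n,m,k}[\tau]$ is obtained by swapping the first occurrences of $x$ and $y$; $\mathbf d_{n,m,k}[\tau]$, $\mathbf d'_{n,m,k}[\tau]$ are $\mathbf c_{n,m,k}[\tau]$, $\mathbf c'_{n,m,k}[\tau]$ read right to left. $\Phi_1$ is the set of all identities $\mathbf c_{n,m,k}[\tau]\approx\mathbf c'_{n,m,k}[\tau]$, $\mathbf d_{n,m,k}[\tau]\approx\mathbf d'_{n,m,k}[\tau]$. $\mathbf D_{15}=\operatorname{var}\{\Phi_1,\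 xyx\approx x^2yx,\ xyx\approx xyx^2,\ (xy)^2\approx(yx)^2\}$. *)

theory Defs
  imports Main "HOL-Combinatorics.Permutations"
begin

definition eval_word :: "('b \<Rightarrow> 'a::monoid_mult) \<Rightarrow> 'b list \<Rightarrow> 'a" where
  "eval_word f w = prod_list (map f w)"

definition sat_id :: "'a::monoid_mult itself \<Rightarrow> 'b list \<times> 'b list \<Rightarrow> bool" where
  "sat_id M uv \<longleftrightarrow> (\<forall>f::'b \<Rightarrow> 'a. eval_word f (fst uv) = eval_word f (snd uv))"

datatype letter = X | Y | T | Z nat | Tl nat | Yl nat

text \<open>The word c_{n,m,k}[tau]; the flag b selects c (b = False) or c' (b = True,
first occurrences of x and y swapped).\<close>
definition c_word :: "bool \<Rightarrow> nat \<Rightarrow> nat \<Rightarrow> nat \<Rightarrow> (nat \<Rightarrow> nat) \<Rightarrow> letter list" where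
  "c_word b n m k \<tau> =
     concat (map (\<lambda>i. [Z i, Tl i]) [1..<n+1])
     @ (if b then [Y, X] else [X, Y]) @ [T]
     @ concat (map (\<lambda>i. [Z i, Tl i]) [n+1..<n+m+1])
     @ [X]
     @ concat (map (\<lambda>i. [Z (\<tau> i), Yl i, Yl i]) [1..<n+m+k])
     @ [Z (\<tau> (n+m+k)), Y]
     @ concat (map (\<lambda>i. [Tl i, Z i]) [n+m+1..<n+m+k+1])"

definition Phi1 :: "(letter list \<times> letter list) set" where
  "Phi1 = {(c_word False n m k \<tau>, c_word True n m k \<tau>) | n m k \<tau>.
              n \<ge> 1 \<and> m \<ge> 1 \<and> k \<ge> 1 \<and> \<tau> permutes {1..n+m+k}}
        \<union> {(rev (c_word False n m k \<tau>), rev (c_word True n m k \<tau>)) | n m k \<tau>.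
              n \<ge> 1 \<and> m \<ge> 1 \<and> k \<ge> 1 \<and> \<tau> permutes {1..n+m+k}}"

definition D15_ids :: "(letter list \<times> letter list) set" where
  "D15_ids = Phi1 \<union> {([X,Y,X], [X,X,Y,X]), ([X,Y,X], [X,Y,X,X]), ([X,Y,X,Y], [Y,X,Y,X])}"

definition in_D15 :: "'a::monoid_mult itself \<Rightarrow> bool" where
  "in_D15 M \<longleftrightarrow> (\<forall>uv\<in>D15_ids. sat_id M uv)"

end

theory Submission
  imports Defs
begin

lemma prod_concat_map:
  "prod_list (map (g::'b \<Rightarrow> 'a::monoid_mult) (concat (map F xs))) = prod_list (map (\<lambda>i. prod_list (map g (F i))) xs)"
  by (induction xs) auto

lemma prod_ones:
  "(\<forall>i\<in>set xs. h i = (1::'a::monoid_mult)) \<Longrightarrow> prod_list (map h xs) = 1"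
  by (induction xs) auto

lemma prod_shift:
  "prod_list (map (h::nat \<Rightarrow> 'a::monoid_mult) [Suc 0..<Suc N]) = prod_list (map (\<lambda>j. h (Suc j)) [0..<N])"
  by (induction N) auto

lemma prod_sq:
  assumes "length rr \<le> N"
  shows "prod_list (map (\<lambda>j. (if j < length rr then rr ! j else 1) * (if j < length rr then rr ! j else 1)) [0..<N])
       = prod_list (map (\<lambda>a. a * a) (rr :: 'a::monoid_mult list))"
proof -
  have "[0..<N] = [0..<length rr] @ [length rr..<N]" using assms
    by (metis le0 upt_add_eq_append add_diff_inverse_nat not_le)
  then have "prod_list (map (\<lambda>j. (if j < length rr then rr ! j else 1) * (if j < length rr then rr ! j else 1)) [0..<N])
      = prod_list (map (\<lambda>j. (if j < length rr then rr ! j else 1) * (if j < length rr then rr ! j else 1)) [0..<length rr])"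
    by (simp add: prod_ones)
  also have "\<dots> = prod_list (map (\<lambda>j. rr ! j * rr ! j) [0..<length rr])"
    by (intro arg_cong[where f=prod_list] map_cong) auto
  also have "\<dots> = prod_list (map (\<lambda>a. a * a) rr)"
    by (metis (no_types) map_map[of "\<lambda>a. a * a" "\<lambda>j. rr ! j", unfolded comp_def] map_nth)
  finally show ?thesis .
qed

lemma double_one:
  fixes f :: "nat \<Rightarrow> 'm::monoid_mult"
  assumes H1: "\<And>a b::'m. a * b * a = a * a * b * a"
    and H2: "\<And>a b::'m. a * b * a = a * b * a * a"
    and c: "count_list (A @ [c] @ B) c \<ge> 2"
  shows "prod_list (map f (A @ [c] @ B)) = prod_list (map f (A @ [c, c] @ B))"
proof (cases "c \<in> set A")
  case True
  then obtain A1 A2 where A: "A = A1 @ c # A2" by (meson split_list)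
  have e: "f c * prod_list (map f A2) * f c = f c * prod_list (map f A2) * f c * f c" by (rule H2)
  have "prod_list (map f A1) * (f c * prod_list (map f A2) * f c) * prod_list (map f B)
      = prod_list (map f A1) * (f c * prod_list (map f A2) * f c * f c) * prod_list (map f B)"
    by (subst e) (rule refl)
  then show ?thesis using A by (simp add: mult.assoc del: mult_1_left)
next
  case False
  then have "count_list A c = 0" by (simp add: count_list_0_iff)
  then have "c \<in> set B" using c by (cases "c \<in> set B") (auto simp: count_notin)
  then obtain B1 B2 where B: "B = B1 @ c # B2" by (meson split_list)
  have e: "f c * prod_list (map f B1) * f c = f c * f c * prod_list (map f B1) * f c" by (rule H1)
  have "prod_list (map f A) * (f c * prod_list (map f B1) * f c) * prod_list (map f B2)
      = prod_list (map f A) * (f c * f c * prod_list (map f B1) * f c) * prod_list (map f B2)"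
    by (subst e) (rule refl)
  then show ?thesis using B by (simp add: mult.assoc del: mult_1_left)
qed

lemma double_all:
  fixes f :: "nat \<Rightarrow> 'm::monoid_mult"
  assumes H1: "\<And>a b::'m. a * b * a = a * a * b * a"
    and H2: "\<And>a b::'m. a * b * a = a * b * a * a"
  shows "(\<forall>c\<in>set r. count_list (A @ r @ B) c \<ge> 2) \<Longrightarrow>
    prod_list (map f (A @ r @ B)) = prod_list (map f (A @ concat (map (\<lambda>c. [c, c]) r) @ B))"
proof (induction r arbitrary: A)
  case Nil
  then show ?case by simp
next
  case (Cons c r)
  have "prod_list (map f (A @ [c] @ (r @ B))) = prod_list (map f (A @ [c, c] @ (r @ B)))"
    by (rule double_one[OF H1 H2]) (use Cons.prems in simp)
  also have "\<dots> = prod_list (map f ((A @ [c, c]) @ r @ B))" by simp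
  also have "\<dots> = prod_list (map f ((A @ [c, c]) @ concat (map (\<lambda>c. [c, c]) r) @ B))"
    by (rule Cons.IH) (use Cons.prems in auto)
  finally show ?case by simp
qed

theorem lemma6p2:
  fixes p q r s :: "nat list" and x y :: nat
  assumes "\<forall>c\<in>set r. count_list (p @ [x, y] @ q @ [x] @ r @ [y] @ s) c \<ge> 2"
    and "in_D15 TYPE('m::monoid_mult)"
  shows "sat_id TYPE('m) (p @ [x, y] @ q @ [x] @ r @ [y] @ s, p @ [y, x] @ q @ [x] @ r @ [y] @ s)"
proof -
  have ids: "sat_id TYPE('m) uv" if "uv \<in> D15_ids" for uv
    using assms(2) that unfolding in_D15_def by blast
  have H1: "a * b * a = a * a * b * a" for a b :: 'm
  proof -
    have "sat_id TYPE('m) ([X,Y,X], [X,X,Y,X])" by (rule ids) (simp add: D15_ids_def)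
    then have "eval_word (\<lambda>l. case l of X \<Rightarrow> a | Y \<Rightarrow> b | _ \<Rightarrow> 1) [X,Y,X] = eval_word (\<lambda>l. case l of X \<Rightarrow> a | Y \<Rightarrow> b | _ \<Rightarrow> 1) [X,X,Y,X]"
      unfolding sat_id_def by auto
    then show ?thesis by (simp add: eval_word_def) (metis mult.assoc)
  qed
  have H2: "a * b * a = a * b * a * a" for a b :: 'm
  proof -
    have "sat_id TYPE('m) ([X,Y,X], [X,Y,X,X])" by (rule ids) (simp add: D15_ids_def)
    then have "eval_word (\<lambda>l. case l of X \<Rightarrow> a | Y \<Rightarrow> b | _ \<Rightarrow> 1) [X,Y,X] = eval_word (\<lambda>l. case l of X \<Rightarrow> a | Y \<Rightarrow> b | _ \<Rightarrow> 1) [X,Y,X,X]"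
      unfolding sat_id_def by auto
    then show ?thesis by (simp add: eval_word_def) (metis mult.assoc)
  qed
  show ?thesis unfolding sat_id_def
  proof (intro allI, simp only: fst_conv snd_conv)
    fix f :: "nat \<Rightarrow> 'm"
    define k where "k = length r + 1"
    define rr where "rr = map f r"
    define g where "g = (\<lambda>l. case l of X \<Rightarrow> f x | Y \<Rightarrow> f y | T \<Rightarrow> prod_list (map f q)
        | Z i \<Rightarrow> 1 | Tl i \<Rightarrow> (if i = 1 then prod_list (map f p) else if i = 3 then prod_list (map f s) else 1)
        | Yl i \<Rightarrow> (case i of 0 \<Rightarrow> 1 | Suc j \<Rightarrow> (if j < length rr then rr ! j else 1)))"
    have "sat_id TYPE('m) (c_word False 1 1 k id, c_word True 1 1 k id)"
    proof (rule ids)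
      have perm: "id permutes {1..1+1+k}" by (rule permutes_id)
      have k1: "(1::nat) \<le> k" by (simp add: k_def)
      show "(c_word False 1 1 k id, c_word True 1 1 k id) \<in> D15_ids"
        unfolding D15_ids_def Phi1_def
        apply (rule UnI1, rule UnI1, rule CollectI)
        apply (rule exI[of _ 1], rule exI[of _ 1], rule exI[of _ k], rule exI[of _ id])
        using perm k1 by simp
    qed
    then have E: "eval_word g (c_word False 1 1 k id) = eval_word g (c_word True 1 1 k id)"
      unfolding sat_id_def by auto
    have mid: "prod_list (map g (concat (map (\<lambda>i. [Z (id i), Yl i, Yl i]) [1..<1+1+k])))
        = prod_list (map (\<lambda>a. a * a) rr)"
    proof -
      have "prod_list (map g (concat (map (\<lambda>i. [Z (id i), Yl i, Yl i]) [1..<1+1+k])))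
          = prod_list (map (\<lambda>i. g (Yl i) * g (Yl i)) [Suc 0..<Suc (Suc k)])"
        by (simp add: prod_concat_map g_def)
      also have "\<dots> = prod_list (map (\<lambda>j. (if j < length rr then rr ! j else 1) * (if j < length rr then rr ! j else 1)) [0..<Suc k])"
        by (simp only: prod_shift) (simp add: g_def One_nat_def del: upt_Suc)
      also have "\<dots> = prod_list (map (\<lambda>a. a * a) rr)"
        by (rule prod_sq) (simp add: k_def rr_def)
      finally show ?thesis .
    qed
    have suf: "prod_list (map g (concat (map (\<lambda>i. [Tl i, Z i]) [1+1+1..<1+1+k+1]))) = prod_list (map f s)"
    proof -
      have "[1+1+1..<1+1+k+1] = 3 # [4..<k+3]" by (simp add: k_def upt_conv_Cons eval_nat_numeral del: upt_Suc)
      then show ?thesis by (simp add: prod_concat_map g_def prod_ones)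
    qed
    have sqr: "prod_list (map (\<lambda>a. a * a) rr) = prod_list (map f (concat (map (\<lambda>c. [c, c]) r)))"
      unfolding rr_def by (induction r) (auto simp: mult.assoc)
    have cw: "eval_word g (c_word b 1 1 k id) = prod_list (map f p) * ((if b then f y * f x else f x * f y)
        * (prod_list (map f q) * (f x * (prod_list (map f (concat (map (\<lambda>c. [c, c]) r))) * (f y * prod_list (map f s))))))" for b
    proof -
      have "eval_word g (c_word b 1 1 k id) = prod_list (map f p) * ((if b then f y * f x else f x * f y)
        * (prod_list (map f q) * (f x * (prod_list (map g (concat (map (\<lambda>i. [Z (id i), Yl i, Yl i]) [1..<1+1+k])))
          * (f y * prod_list (map g (concat (map (\<lambda>i. [Tl i, Z i]) [1+1+1..<1+1+k+1]))))))))"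
        unfolding c_word_def eval_word_def
        by (simp del: id_apply add: g_def mult.assoc)
      then show ?thesis using mid suf sqr by simp
    qed
    have W1: "prod_list (map f ((p @ [x, y] @ q @ [x]) @ r @ ([y] @ s))) = prod_list (map f ((p @ [x, y] @ q @ [x]) @ concat (map (\<lambda>c. [c, c]) r) @ ([y] @ s)))"
      by (rule double_all[OF H1 H2]) (use assms(1) in simp)
    have W2: "prod_list (map f ((p @ [y, x] @ q @ [x]) @ r @ ([y] @ s))) = prod_list (map f ((p @ [y, x] @ q @ [x]) @ concat (map (\<lambda>c. [c, c]) r) @ ([y] @ s)))"
      by (rule double_all[OF H1 H2]) (use assms(1) in \<open>auto split: if_splits\<close>)
    show "eval_word f (p @ [x, y] @ q @ [x] @ r @ [y] @ s) = eval_word f (p @ [y, x] @ q @ [x] @ r @ [y] @ s)"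
      using W1 W2 E cw[of False] cw[of True] unfolding eval_word_def by (simp add: mult.assoc)
  qed
qed

end
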